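(* Let $P$ be a program over a propositional signature $\Sigma$. Then $NF(P)$ is in normal form, and $NF(P)$ is strongly equivalent to $P$.
   Context: A program over $\Sigma$ is a finite set of rules $r$ of the form $a_1\vee\dots\vee a_k\leftarrow b_1,\dots,b_l,\ not\,c_1,\dots,not\,c_m,\ not\,not\,d_1,\dots,not\,not\,d_n$ with all atoms in $\Sigma$ and $k,l,m,n\ge 0$. Write $H(r)=\{a_1,\dots,a_k\}$, $B^+(r)=\{b_1,\dots,b_l\}$, $B^-(r)=\{c_1,\dots,c_m\}$, $B^{--}(r)=\{d_1,\dots,d_n\}$, and $B(r)=B^+(r)\cup\{not\,c: c\in B^-(r)\}\cup\{not\,not\,d: d\in B^{--}(r)\}$ (the body; its elements are called literals). For $I\subseteq\Sigma$, the reduct is $P^I=\{H(r)\leftarrow B^+(r): r\in P,\ B^-(r)\cap I=\emptyset,\ B^{--}(r)\subseteq I\}$. A set $I$ classically satisfies $r$ if $B^+(r)\subseteq I$, $B^-(r)\cap I=\emptyset$ and $B^{--}(r)\subseteq I$ together imply $H(r)\cap I\neq\emptyset$. An HT-interpretation $\langle X,Y\rangle$ with $X\subseteq Y$ is an HT-model of $P$ if $Y$ classically satisfies every rule of $P$ and $X$ classically satisfies every rule of $P^Y$. $Y$ is an answer set of $P$ if $\langle Y,Y\rangle$ is an HT-model of $P$ and no $\langle X,Y\rangle$ with $X\subsetneq Y$ is. $AS(P)$ denotes the set of answer sets. Programs $P_1,P_2$ are strongly equivalent if $AS(P_1\cup R)=AS(P_2\cup R)$ for every program $R$. A rule $r$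 is tautological if $H(r)\cap B^+(r)\ne\emptyset$, or $B^+(r)\cap B^-(r)\ne\emptyset$, or $B^-(r)\cap B^{--}(r)\ne\emptyset$. A rule $r\in P$ is minimal in $P$ if there is no $r'\in P$ with ($H(r')\subseteq H(r)$ and $B(r')\subsetneq B(r)$) or ($H(r')\subsetneq H(r)$ and $B(r')\subseteq B(r)$). $P$ is in normal form if: (i) for every atom $a$ and every $r\in P$, at most one of $a$, $not\,a$, $not\,not\,a$ is in $B(r)$; (ii) if $a\in H(r)$ then neither $a$ nor $not\,a$ is in $B(r)$; (iii) every rule of $P$ is minimal in $P$. The program $NF(P)$ is obtained from $P$ by: 1. removing all tautological rules; 2. in each remaining rule $r$, removing from $B^{--}(r)$ every atom that is in $B^+(r)$; 3. in each remaining rule $r$, removing from $H(r)$ every atom that is in $B^-(r)$; 4. removing from the resulting program all rules that are not minimal in it. *)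

theory Defs
  imports Main
begin

text \<open>Atoms range over the type 'a (the signature). A rule is
  H <- B+, not B-, not not B--, each component a finite set of atoms.\<close>

record 'a rule =
  hd :: "'a set"
  bpos :: "'a set"
  bneg :: "'a set"
  bnn :: "'a set"

datatype 'a lit = Pos 'a | Neg 'a | NNeg 'a

definition body :: "'a rule \<Rightarrow> 'a lit set" where
  "body r = Pos ` bpos r \<union> Neg ` bneg r \<union> NNeg ` bnn r"

definition is_rule :: "'a rule \<Rightarrow> bool" where
  "is_rule r \<longleftrightarrow> finite (hd r) \<and> finite (bpos r) \<and> finite (bneg r) \<and> finite (bnn r)"

definition is_program :: "'a rule set \<Rightarrow> bool" where
  "is_program P \<longleftrightarrow> finite P \<and> (\<forall>r\<in>P. is_rule r)"

definition reduct :: "'a rule set \<Rightarrow> 'a set \<Rightarrow> 'a rule set" where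
  "reduct P I = {\<lparr>hd = hd r, bpos = bpos r, bneg = {}, bnn = {}\<rparr> | r.
                  r \<in> P \<and> bneg r \<inter> I = {} \<and> bnn r \<subseteq> I}"

definition csat_rule :: "'a set \<Rightarrow> 'a rule \<Rightarrow> bool" where
  "csat_rule I r \<longleftrightarrow>
     (bpos r \<subseteq> I \<and> bneg r \<inter> I = {} \<and> bnn r \<subseteq> I \<longrightarrow> hd r \<inter> I \<noteq> {})"

definition csat :: "'a set \<Rightarrow> 'a rule set \<Rightarrow> bool" where
  "csat I P \<longleftrightarrow> (\<forall>r\<in>P. csat_rule I r)"

definition ht_model :: "'a set \<Rightarrow> 'a set \<Rightarrow> 'a rule set \<Rightarrow> bool" where
  "ht_model X Y P \<longleftrightarrow> X \<subseteq> Y \<and> csat Y P \<and> csat X (reduct P Y)"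

definition answer_set :: "'a set \<Rightarrow> 'a rule set \<Rightarrow> bool" where
  "answer_set Y P \<longleftrightarrow> ht_model Y Y P \<and> \<not> (\<exists>X. X \<subset> Y \<and> ht_model X Y P)"

definition AS :: "'a rule set \<Rightarrow> 'a set set" where
  "AS P = {Y. answer_set Y P}"

definition strongly_equiv :: "'a rule set \<Rightarrow> 'a rule set \<Rightarrow> bool" where
  "strongly_equiv P1 P2 \<longleftrightarrow> (\<forall>R. is_program R \<longrightarrow> AS (P1 \<union> R) = AS (P2 \<union> R))"

definition tautological :: "'a rule \<Rightarrow> bool" where
  "tautological r \<longleftrightarrow> hd r \<inter> bpos r \<noteq> {} \<or> bpos r \<inter> bneg r \<noteq> {} \<or> bneg r \<inter> bnn r \<noteq> {}"

definition minimal_in :: "'a rule \<Rightarrow> 'a rule set \<Rightarrow> bool" where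
  "minimal_in r P \<longleftrightarrow> \<not> (\<exists>r'\<in>P. (hd r' \<subseteq> hd r \<and> body r' \<subset> body r) \<or>
                                   (hd r' \<subset> hd r \<and> body r' \<subseteq> body r))"

definition normal_form :: "'a rule set \<Rightarrow> bool" where
  "normal_form P \<longleftrightarrow>
     (\<forall>r\<in>P. \<forall>a. card ({Pos a, Neg a, NNeg a} \<inter> body r) \<le> 1) \<and>
     (\<forall>r\<in>P. \<forall>a\<in>hd r. Pos a \<notin> body r \<and> Neg a \<notin> body r) \<and>
     (\<forall>r\<in>P. minimal_in r P)"

definition NF :: "'a rule set \<Rightarrow> 'a rule set" where
  "NF P = (let P1 = {r\<in>P. \<not> tautological r};
               P2 = (\<lambda>r. r\<lparr>bnn := bnn r - bpos r\<rparr>) ` P1;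
               P3 = (\<lambda>r. r\<lparr>hd := hd r - bneg r\<rparr>) ` P2
           in {r\<in>P3. minimal_in r P3})"

end

theory Submission
  imports Defs
begin

definition htsat :: "'a set \<Rightarrow> 'a set \<Rightarrow> 'a rule \<Rightarrow> bool" where
  "htsat X Y r \<longleftrightarrow> csat_rule Y r \<and>
     (bneg r \<inter> Y = {} \<and> bnn r \<subseteq> Y \<longrightarrow> bpos r \<subseteq> X \<longrightarrow> hd r \<inter> X \<noteq> {})"

lemma csat_reduct:
  "csat X (reduct P Y) \<longleftrightarrow> (\<forall>r\<in>P. bneg r \<inter> Y = {} \<and> bnn r \<subseteq> Y \<longrightarrow> bpos r \<subseteq> X \<longrightarrow> hd r \<inter> X \<noteq> {})"
proof
  assume H: "csat X (reduct P Y)"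
  show "\<forall>r\<in>P. bneg r \<inter> Y = {} \<and> bnn r \<subseteq> Y \<longrightarrow> bpos r \<subseteq> X \<longrightarrow> hd r \<inter> X \<noteq> {}"
  proof (intro ballI impI)
    fix r assume "r \<in> P" "bneg r \<inter> Y = {} \<and> bnn r \<subseteq> Y" "bpos r \<subseteq> X"
    then have "\<lparr>hd = hd r, bpos = bpos r, bneg = {}, bnn = {}\<rparr> \<in> reduct P Y"
      unfolding reduct_def by blast
    with H have "csat_rule X \<lparr>hd = hd r, bpos = bpos r, bneg = {}, bnn = {}\<rparr>"
      unfolding csat_def by blast
    then show "hd r \<inter> X \<noteq> {}" using \<open>bpos r \<subseteq> X\<close> unfolding csat_rule_def by simp
  qed
next
  assume "\<forall>r\<in>P. bneg r \<inter> Y = {} \<and> bnn r \<subseteq> Y \<longrightarrow> bpos r \<subseteq> X \<longrightarrow> hd r \<inter> X \<noteq> {}"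
  then show "csat X (reduct P Y)"
    unfolding csat_def reduct_def csat_rule_def by auto
qed

lemma ht_model_char:
  "ht_model X Y P \<longleftrightarrow> X \<subseteq> Y \<and> (\<forall>r\<in>P. htsat X Y r)"
  unfolding ht_model_def htsat_def csat_reduct unfolding csat_def
  by blast

lemma ht_model_union:
  "ht_model X Y (A \<union> B) \<longleftrightarrow> ht_model X Y A \<and> ht_model X Y B"
  unfolding ht_model_char by auto

lemma taut_sat: "X \<subseteq> Y \<Longrightarrow> tautological r \<Longrightarrow> htsat X Y r"
  unfolding htsat_def tautological_def csat_rule_def by blast

lemma step2_sat: "X \<subseteq> Y \<Longrightarrow> htsat X Y (r\<lparr>bnn := bnn r - bpos r\<rparr>) \<longleftrightarrow> htsat X Y r"
  unfolding htsat_def csat_rule_def by auto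

lemma step3_sat: "X \<subseteq> Y \<Longrightarrow> htsat X Y (r\<lparr>hd := hd r - bneg r\<rparr>) \<longleftrightarrow> htsat X Y r"
  unfolding htsat_def csat_rule_def by auto

lemma body_sub: "body r' \<subseteq> body r \<Longrightarrow> bpos r' \<subseteq> bpos r \<and> bneg r' \<subseteq> bneg r \<and> bnn r' \<subseteq> bnn r"
  unfolding body_def by auto

lemma dom_sat: "hd r' \<subseteq> hd r \<Longrightarrow> body r' \<subseteq> body r \<Longrightarrow> htsat X Y r' \<Longrightarrow> htsat X Y r"
  apply (drule body_sub)
  unfolding htsat_def csat_rule_def by blast

definition fm :: "'a rule \<Rightarrow> nat" where
  "fm r = card (hd r) + card (body r)"

lemma finite_body: "is_rule r \<Longrightarrow> finite (body r)"
  unfolding is_rule_def body_def by auto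

lemma exists_minimal:
  assumes fin: "\<forall>s\<in>Q. is_rule s"
  shows "r \<in> Q \<Longrightarrow> \<exists>s\<in>Q. minimal_in s Q \<and> hd s \<subseteq> hd r \<and> body s \<subseteq> body r"
proof (induction "fm r" arbitrary: r rule: less_induct)
  case less
  show ?case
  proof (cases "minimal_in r Q")
    case True
    then show ?thesis using less.prems by blast
  next
    case False
    then obtain t where t: "t \<in> Q" and
      d: "(hd t \<subseteq> hd r \<and> body t \<subset> body r) \<or> (hd t \<subset> hd r \<and> body t \<subseteq> body r)"
      unfolding minimal_in_def by blast
    have fr: "finite (hd r)" "finite (body r)" using fin less.prems finite_body
      unfolding is_rule_def by auto
    have "fm t < fm r"
      using d fr unfolding fm_def
      by (meson add_le_less_mono add_less_le_mono card_mono psubset_card_mono)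
    then obtain s where "s \<in> Q" "minimal_in s Q" "hd s \<subseteq> hd t" "body s \<subseteq> body t"
      using less.hyps t by blast
    then show ?thesis using d by blast
  qed
qed

lemma NF_sat:
  assumes prog: "is_program P" and XY: "X \<subseteq> Y"
  shows "(\<forall>r\<in>NF P. htsat X Y r) \<longleftrightarrow> (\<forall>r\<in>P. htsat X Y r)"
proof -
  define P1 where "P1 = {r\<in>P. \<not> tautological r}"
  define P2 where "P2 = (\<lambda>r. r\<lparr>bnn := bnn r - bpos r\<rparr>) ` P1"
  define P3 where "P3 = (\<lambda>r. r\<lparr>hd := hd r - bneg r\<rparr>) ` P2"
  have NFe: "NF P = {r\<in>P3. minimal_in r P3}"
    unfolding NF_def P1_def P2_def P3_def Let_def by simp
  have e1: "(\<forall>r\<in>P1. htsat X Y r) \<longleftrightarrow> (\<forall>r\<in>P. htsat X Y r)"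
    unfolding P1_def using taut_sat[OF XY] by auto
  have e2: "(\<forall>r\<in>P2. htsat X Y r) \<longleftrightarrow> (\<forall>r\<in>P1. htsat X Y r)"
    unfolding P2_def using step2_sat[OF XY] by auto
  have e3: "(\<forall>r\<in>P3. htsat X Y r) \<longleftrightarrow> (\<forall>r\<in>P2. htsat X Y r)"
    unfolding P3_def using step3_sat[OF XY] by auto
  have fin3: "\<forall>s\<in>P3. is_rule s"
    using prog unfolding P3_def P2_def P1_def is_program_def is_rule_def by auto
  have e4: "(\<forall>r\<in>NF P. htsat X Y r) \<longleftrightarrow> (\<forall>r\<in>P3. htsat X Y r)"
  proof
    assume H: "\<forall>r\<in>NF P. htsat X Y r"
    show "\<forall>r\<in>P3. htsat X Y r"
    proof
      fix r assume "r \<in> P3"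
      then obtain s where "s\<in>P3" "minimal_in s P3" "hd s \<subseteq> hd r" "body s \<subseteq> body r"
        using exists_minimal[OF fin3] by blast
      then show "htsat X Y r" using H NFe dom_sat by blast
    qed
  next
    assume "\<forall>r\<in>P3. htsat X Y r"
    then show "\<forall>r\<in>NF P. htsat X Y r" using NFe by auto
  qed
  show ?thesis using e1 e2 e3 e4 by simp
qed

lemma NF_ht: "is_program P \<Longrightarrow> ht_model X Y (NF P) \<longleftrightarrow> ht_model X Y P"
  unfolding ht_model_char using NF_sat by blast

lemma NF_se: "is_program P \<Longrightarrow> strongly_equiv (NF P) P"
  unfolding strongly_equiv_def AS_def answer_set_def
  by (simp add: ht_model_union NF_ht)

lemma fields_eq: "r = (r0\<lparr>bnn := bnn r0 - bpos r0\<rparr>)\<lparr>hd := hd r0 - bneg r0\<rparr> \<Longrightarrow>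
  bpos r = bpos r0 \<and> bneg r = bneg r0 \<and> bnn r = bnn r0 - bpos r0 \<and> hd r = hd r0 - bneg r0"
  by simp

lemma body_mem:
  assumes "bpos r = bpos r0" "bneg r = bneg r0" "bnn r = bnn r0 - bpos r0"
  shows "Pos a \<in> body r \<longleftrightarrow> a \<in> bpos r0" "Neg a \<in> body r \<longleftrightarrow> a \<in> bneg r0"
      "NNeg a \<in> body r \<longleftrightarrow> a \<in> bnn r0 - bpos r0"
  using assms unfolding body_def by auto

lemma card_le1: "S \<subseteq> {x} \<Longrightarrow> card S \<le> 1"
proof -
  assume "S \<subseteq> {x}"
  then have "card S \<le> card {x}" by (intro card_mono) auto
  then show ?thesis by simp
qed

lemma NF_shape:
  assumes "r \<in> NF P"
  obtains r0 where "\<not> tautological r0" "bpos r = bpos r0" "bneg r = bneg r0"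
    "bnn r = bnn r0 - bpos r0" "hd r = hd r0 - bneg r0"
proof -
  define P1 where "P1 = {r\<in>P. \<not> tautological r}"
  define P2 where "P2 = (\<lambda>r. r\<lparr>bnn := bnn r - bpos r\<rparr>) ` P1"
  define P3 where "P3 = (\<lambda>r. r\<lparr>hd := hd r - bneg r\<rparr>) ` P2"
  have NFe: "NF P = {r\<in>P3. minimal_in r P3}"
    unfolding NF_def P1_def P2_def P3_def Let_def by simp
  have "r \<in> P3" using assms NFe by blast
  then obtain r1 where r1: "r1 \<in> P2" "r = r1\<lparr>hd := hd r1 - bneg r1\<rparr>" unfolding P3_def by blast
  then obtain r0 where r0: "r0 \<in> P1" "r1 = r0\<lparr>bnn := bnn r0 - bpos r0\<rparr>" unfolding P2_def by blast
  have "r = (r0\<lparr>bnn := bnn r0 - bpos r0\<rparr>)\<lparr>hd := hd r0 - bneg r0\<rparr>"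
    using r1(2) r0(2) by simp
  note fe = fields_eq[OF this]
  have "\<not> tautological r0" using r0(1) unfolding P1_def by blast
  then show ?thesis using fe that by blast
qed

lemma NF_i: "r \<in> NF P \<Longrightarrow> card ({Pos a, Neg a, NNeg a} \<inter> body r) \<le> 1"
proof -
  assume "r \<in> NF P"
  then obtain r0 where nt: "\<not> tautological r0" and
      f: "bpos r = bpos r0" "bneg r = bneg r0" "bnn r = bnn r0 - bpos r0" "hd r = hd r0 - bneg r0"
    by (rule NF_shape)
  note m = body_mem[OF f(1-3)]
  have d: "bpos r0 \<inter> bneg r0 = {}" "bneg r0 \<inter> bnn r0 = {}"
    using nt unfolding tautological_def by auto
  have "{Pos a, Neg a, NNeg a} \<inter> body r \<subseteq> {if a \<in> bpos r0 then Pos a else if a \<in> bneg r0 then Neg a else NNeg a}"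
  proof
    fix x assume "x \<in> {Pos a, Neg a, NNeg a} \<inter> body r"
    then have "x = Pos a \<and> a \<in> bpos r0 \<or> x = Neg a \<and> a \<in> bneg r0 \<or> x = NNeg a \<and> a \<in> bnn r0 - bpos r0"
      using m by blast
    then show "x \<in> {if a \<in> bpos r0 then Pos a else if a \<in> bneg r0 then Neg a else NNeg a}"
      using d by auto
  qed
  then show "card ({Pos a, Neg a, NNeg a} \<inter> body r) \<le> 1" by (rule card_le1)
qed

lemma NF_ii: "r \<in> NF P \<Longrightarrow> a \<in> hd r \<Longrightarrow> Pos a \<notin> body r \<and> Neg a \<notin> body r"
proof -
  assume "r \<in> NF P" and a: "a \<in> hd r"
  from \<open>r \<in> NF P\<close> obtain r0 where nt: "\<not> tautological r0" and
      f: "bpos r = bpos r0" "bneg r = bneg r0" "bnn r = bnn r0 - bpos r0" "hd r = hd r0 - bneg r0"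
    by (rule NF_shape)
  note m = body_mem[OF f(1-3)]
  have "hd r0 \<inter> bpos r0 = {}" using nt unfolding tautological_def by blast
  moreover have "a \<in> hd r0" "a \<notin> bneg r0" using a f(4) by auto
  ultimately have "a \<notin> bpos r0" by blast
  then show "Pos a \<notin> body r \<and> Neg a \<notin> body r"
    using \<open>a \<notin> bneg r0\<close> by (simp add: m)
qed

lemma NF_iii: "r \<in> NF P \<Longrightarrow> minimal_in r (NF P)"
  unfolding NF_def Let_def minimal_in_def by blast

lemma NF_normal: "normal_form (NF P)"
proof -
  have i: "\<forall>r\<in>NF P. \<forall>a. card ({Pos a, Neg a, NNeg a} \<inter> body r) \<le> 1"
    by (intro ballI allI NF_i)
  have ii: "\<forall>r\<in>NF P. \<forall>a\<in>hd r. Pos a \<notin> body r \<and> Neg a \<notin> body r"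
    by (intro ballI NF_ii)
  have iii: "\<forall>r\<in>NF P. minimal_in r (NF P)"
    by (intro ballI NF_iii)
  show ?thesis using i ii iii unfolding normal_form_def by (intro conjI)
qed

theorem proposition1:
  fixes P :: "'a rule set"
  assumes "is_program P"
  shows "normal_form (NF P) \<and> strongly_equiv (NF P) P"
  using assms by (intro conjI NF_normal NF_se)

end
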